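(* Let $(\mathcal{X},\rho)$ be a length space and $c:\mathcal{X}\to\mathcal{Y}$ a classifier. Then for every $x\in\mathcal{X}$, $$m_c(x)=\rho(x,\partial\mathcal{X}).$$
   Context: A metric space $(\mathcal{X},\rho)$ is a length space if for all $x,x'$, $\rho(x,x')=\inf_\gamma \ell(\gamma)$, the infimum over continuous paths $\gamma:[0,1]\to\mathcal{X}$ from $x$ to $x'$ and $\ell(\gamma)$ the length of $\gamma$. Margin $m_c(x)=\inf_{x':c(x')\neq c(x)}\rho(x,x')$; $\partial\mathcal{X}=\{x:m_c(x)=0\}$; $\rho(x,A)=\inf_{a\in A}\rho(x,a)$; infima over empty sets are $+\infty$. *)

theory Defs
  imports "HOL-Analysis.Analysis"
begin

definition path_len :: "(real \<Rightarrow> 'a::metric_space) \<Rightarrow> ereal" where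
  "path_len \<gamma> = (SUP (n, t) \<in> {(n, t). t 0 = 0 \<and> t n = 1 \<and> (\<forall>i<n. t i \<le> t (Suc i))}.
      ereal (\<Sum>i<n. dist (\<gamma> (t i)) (\<gamma> (t (Suc i)))))"

definition length_space :: "'a::metric_space itself \<Rightarrow> bool" where
  "length_space _ \<longleftrightarrow> (\<forall>x x' :: 'a. ereal (dist x x') =
     (INF \<gamma> \<in> {\<gamma>. continuous_on {0..1} \<gamma> \<and> \<gamma> 0 = x \<and> \<gamma> 1 = x'}. path_len \<gamma>))"

text \<open>Margin of a classifier at x (infimum over empty set is +infinity).\<close>
definition margin :: "('a::metric_space \<Rightarrow> 'b) \<Rightarrow> 'a \<Rightarrow> ereal" where
  "margin c x = (INF x' \<in> {x'. c x' \<noteq> c x}. ereal (dist x x'))"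

definition decision_boundary :: "('a::metric_space \<Rightarrow> 'b) \<Rightarrow> 'a set" where
  "decision_boundary c = {x. margin c x = 0}"

definition setdist_e :: "'a::metric_space \<Rightarrow> 'a set \<Rightarrow> ereal" where
  "setdist_e x A = (INF a \<in> A. ereal (dist x a))"

end

theory Submission
  imports Defs
begin

lemma margin_zero_iff:
  "margin c z = 0 \<longleftrightarrow> (\<forall>e>0. \<exists>x'. c x' \<noteq> c z \<and> dist z x' < e)"
proof
  assume h: "margin c z = 0"
  show "\<forall>e>0. \<exists>x'. c x' \<noteq> c z \<and> dist z x' < e"
  proof (intro allI impI)
    fix e :: real assume "e > 0"
    then have "margin c z < ereal e" using h by simp
    then show "\<exists>x'. c x' \<noteq> c z \<and> dist z x' < e"
      unfolding margin_def INF_less_iff by auto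
  qed
next
  assume h: "\<forall>e>0. \<exists>x'. c x' \<noteq> c z \<and> dist z x' < e"
  have ge: "0 \<le> margin c z" unfolding margin_def by (rule INF_greatest) simp
  have "margin c z \<le> 0"
  proof (rule ereal_le_epsilon2)
    fix e :: real assume "0 < e"
    then obtain x' where "c x' \<noteq> c z" "dist z x' < e" using h by blast
    then have "margin c z \<le> ereal (dist z x')" unfolding margin_def
      by (intro INF_lower) auto
    also have "\<dots> \<le> 0 + ereal e" using \<open>dist z x' < e\<close> by simp
    finally show "margin c z \<le> 0 + ereal e" .
  qed
  with ge show "margin c z = 0" by simp
qed

lemma dist_le_path_len:
  assumes "0 \<le> t" "t \<le> 1"
  shows "ereal (dist (\<gamma> 0) (\<gamma> t)) \<le> path_len \<gamma>"
proof -
  define p :: "nat \<Rightarrow> real" where "p = (\<lambda>i. if i = 0 then 0 else if i = 1 then t else 1)"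
  have mem: "(2::nat, p) \<in> {(n, t). t 0 = 0 \<and> t n = 1 \<and> (\<forall>i<n. t i \<le> t (Suc i))}"
    using assms by (auto simp: p_def less_Suc_eq)
  have "ereal (dist (\<gamma> 0) (\<gamma> t)) \<le> ereal (\<Sum>i<2. dist (\<gamma> (p i)) (\<gamma> (p (Suc i))))"
    by (simp add: p_def numeral_2_eq_2)
  also have "\<dots> \<le> path_len \<gamma>" unfolding path_len_def
    using mem by (rule SUP_upper2) simp
  finally show ?thesis .
qed

lemma boundary_on_path:
  fixes \<gamma> :: "real \<Rightarrow> 'a::metric_space"
  assumes cont: "continuous_on {0..1} \<gamma>" and g0: "\<gamma> 0 = x" and g1: "c (\<gamma> 1) \<noteq> c x"
  shows "\<exists>t\<in>{0..1}. \<gamma> t \<in> decision_boundary c"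
proof -
  define S where "S = {t\<in>{0..1::real}. c (\<gamma> t) \<noteq> c x}"
  define ts where "ts = Inf S"
  have "1 \<in> S" using g1 by (simp add: S_def)
  have bdd: "bdd_below S" by (auto simp: S_def bdd_below_def)
  have ts0: "0 \<le> ts" unfolding ts_def using \<open>1 \<in> S\<close>
    by (intro cInf_greatest) (auto simp: S_def)
  have ts1: "ts \<le> 1" unfolding ts_def using \<open>1 \<in> S\<close> bdd by (rule cInf_lower)
  have notS: "c (\<gamma> t) = c x" if "0 \<le> t" "t < ts" for t
  proof (rule ccontr)
    assume "c (\<gamma> t) \<noteq> c x"
    then have "t \<in> S" using that ts1 by (simp add: S_def)
    then have "ts \<le> t" unfolding ts_def using bdd by (rule cInf_lower)
    with that show False by simp
  qed
  define z where "z = \<gamma> ts"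
  have "margin c z = 0"
    unfolding margin_zero_iff
  proof (intro allI impI)
    fix e :: real assume "e > 0"
    from cont ts0 ts1 have "continuous (at ts within {0..1}) \<gamma>"
      by (simp add: continuous_on_eq_continuous_within)
    then obtain d where d: "d > 0" "\<And>t. t \<in> {0..1} \<Longrightarrow> dist t ts < d \<Longrightarrow> dist (\<gamma> t) (\<gamma> ts) < e"
      using \<open>e > 0\<close> unfolding continuous_within_eps_delta by blast
    show "\<exists>x'. c x' \<noteq> c z \<and> dist z x' < e"
    proof (cases "c z = c x")
      case True
      have "Inf S < ts + d" using d(1) by (simp add: ts_def)
      then obtain s where s: "s \<in> S" "s < ts + d"
        using cInf_less_iff[of S "ts + d"] \<open>1 \<in> S\<close> bdd by auto
      have "ts \<le> s" unfolding ts_def using s(1) bdd by (rule cInf_lower)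
      have "dist (\<gamma> s) (\<gamma> ts) < e" using d(2)[of s] s \<open>ts \<le> s\<close> by (auto simp: S_def dist_real_def)
      then show ?thesis using s True by (auto simp: S_def z_def dist_commute)
    next
      case False
      have "ts \<noteq> 0" using False g0 by (auto simp: z_def)
      with ts0 have tsp: "ts > 0" by simp
      define t where "t = max 0 (ts - d/2)"
      have t: "0 \<le> t" "t < ts" "t \<le> 1" using tsp d(1) ts1 by (auto simp: t_def)
      have "dist t ts < d" using t d(1) by (auto simp: t_def dist_real_def)
      then have "dist (\<gamma> t) (\<gamma> ts) < e" using d(2)[of t] t by auto
      moreover have "c (\<gamma> t) \<noteq> c z" using notS[OF t(1,2)] False by simp
      ultimately show ?thesis by (auto simp: z_def dist_commute)
    qed
  qed
  then show ?thesis using ts0 ts1 by (auto simp: decision_boundary_def z_def)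
qed

theorem lemma8:
  fixes c :: "'a::metric_space \<Rightarrow> 'b" and x :: 'a
  assumes "length_space TYPE('a)"
  shows "margin c x = setdist_e x (decision_boundary c)"
proof (rule antisym)
  show "margin c x \<le> setdist_e x (decision_boundary c)"
    unfolding setdist_e_def
  proof (rule INF_greatest)
    fix z assume "z \<in> decision_boundary c"
    then have hz: "\<forall>e>0. \<exists>x'. c x' \<noteq> c z \<and> dist z x' < e"
      by (simp add: decision_boundary_def margin_zero_iff)
    show "margin c x \<le> ereal (dist x z)"
    proof (cases "c z = c x")
      case False
      then show ?thesis unfolding margin_def by (intro INF_lower) auto
    next
      case True
      show ?thesis
      proof (rule ereal_le_epsilon2)
        fix e :: real assume "0 < e"
        then obtain x' where x': "c x' \<noteq> c z" "dist z x' < e" using hz by blast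
        then have "margin c x \<le> ereal (dist x x')" unfolding margin_def using True
          by (intro INF_lower) auto
        also have "\<dots> \<le> ereal (dist x z) + ereal e"
          using dist_triangle[of x x' z] x'(2) by (simp add: dist_commute)
        finally show "margin c x \<le> ereal (dist x z) + ereal e" .
      qed
    qed
  qed
next
  show "setdist_e x (decision_boundary c) \<le> margin c x"
    unfolding margin_def
  proof (rule INF_greatest)
    fix x' assume "x' \<in> {x'. c x' \<noteq> c x}"
    then have cx': "c x' \<noteq> c x" by simp
    show "setdist_e x (decision_boundary c) \<le> ereal (dist x x')"
    proof (rule ereal_le_epsilon2)
      fix e :: real assume "0 < e"
      have eq: "ereal (dist x x') = (INF \<gamma> \<in> {\<gamma>. continuous_on {0..1} \<gamma> \<and> \<gamma> 0 = x \<and> \<gamma> 1 = x'}. path_len \<gamma>)"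
        using assms unfolding length_space_def by blast
      have "(INF \<gamma> \<in> {\<gamma>. continuous_on {0..1} \<gamma> \<and> \<gamma> 0 = x \<and> \<gamma> 1 = x'}. path_len \<gamma>) < ereal (dist x x' + e)"
        using \<open>0 < e\<close> by (simp add: eq[symmetric])
      then obtain \<gamma> where g: "continuous_on {0..1} \<gamma>" "\<gamma> 0 = x" "\<gamma> 1 = x'"
        "path_len \<gamma> < ereal (dist x x' + e)"
        unfolding INF_less_iff by blast
      obtain t where t: "t \<in> {0..1}" "\<gamma> t \<in> decision_boundary c"
        using boundary_on_path[OF g(1,2)] g(3) cx' by blast
      have "setdist_e x (decision_boundary c) \<le> ereal (dist x (\<gamma> t))"
        unfolding setdist_e_def using t(2) by (rule INF_lower)
      also have "\<dots> \<le> path_len \<gamma>" using dist_le_path_len[of t \<gamma>] t(1) g(2) by simp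
      also have "\<dots> \<le> ereal (dist x x') + ereal e" using g(4) by simp
      finally show "setdist_e x (decision_boundary c) \<le> ereal (dist x x') + ereal e" .
    qed
  qed
qed

end
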